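(* Let $X_1, X_2, \ldots$ be independent and identically distributed random variables with a common continuous distribution function, and let $I_1=1$ and, for $t\ge 2$, $I_t = 1$ if $X_t > \max\{X_1,\ldots,X_{t-1}\}$ and $I_t=0$ otherwise. Let $(\omega_t)_{t\ge1}$ be real weights with $\omega_t \sim t^n$ as $t\to\infty$ (i.e. $\omega_t/t^n \to 1$), and define, for $T\ge 2$ and $t=1,\ldots,T$, $$\xi^{\omega}_{Tt} = \omega_t\,\frac{I_t - E(I_t)}{\sigma_T}, \qquad \sigma_t^2 = \sum_{k=1}^{t} \omega_k^2 \operatorname{Var}(I_k).$$ If $n > 0$, then the central limit theorem does not hold for the variables $\xi^{\omega}_{Tt}$, i.e. $\sum_{t=1}^{T} \xi^{\omega}_{Tt}$ does not converge in distribution to the standard normal distribution as $T\to\infty$.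
   Context: $E(I_t)=1/t$ and $\operatorname{Var}(I_t)=\frac1t(1-\frac1t)$; the $I_t$ are independent under the stated assumptions. *)

theory Defs
  imports "HOL-Probability.Probability"
begin

definition record_ind :: "(nat \<Rightarrow> 'a \<Rightarrow> real) \<Rightarrow> nat \<Rightarrow> 'a \<Rightarrow> real" where
  "record_ind X t x =
     (if t = 1 then 1
      else if X t x > Max ((\<lambda>s. X s x) ` {1..<t}) then 1 else 0)"

end

theory Submission imports Defs "HOL-Real_Asymp.Real_Asymp" begin


lemma no_ties:
  fixes M :: "'a measure" and X :: "nat \<Rightarrow> 'a \<Rightarrow> real"
  assumes P: "prob_space M"
    and meas: "\<And>t. t \<ge> 1 \<Longrightarrow> X t \<in> borel_measurable M"
    and ind: "prob_space.indep_vars M (\<lambda>_. borel) X {1..}"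
    and idd: "\<And>t. t \<ge> 1 \<Longrightarrow> distr M borel (X t) = distr M borel (X 1)"
    and cont: "continuous_on UNIV (cdf (distr M borel (X 1)))"
    and ik: "i \<ge> 1" "k \<ge> 1" "i \<noteq> k"
  shows "measure M {x\<in>space M. X i x = X k x} = 0"
proof -
  interpret prob_space M by fact
  define \<mu> where "\<mu> = distr M borel (X 1)"
  have rd: "real_distribution \<mu>" unfolding \<mu>_def
    using meas[of 1] by (auto simp: real_distribution_def real_distribution_axioms_def intro!: prob_space_distr)
  interpret mu: real_distribution \<mu> by fact
  have single: "emeasure \<mu> {a} = 0" for a
  proof -
    have "isCont (cdf \<mu>) a" using cont unfolding \<mu>_def by (simp add: continuous_on_eq_continuous_at)
    then have "measure \<mu> {a} = 0" using mu.isCont_cdf by simp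
    then show ?thesis using mu.emeasure_eq_measure by simp
  qed
  have "indep_vars (\<lambda>_. borel) X (insert i {k})"
    using ik by (intro indep_vars_subset[OF ind]) auto
  from indep_vars_Min[OF _ _ this] ik
  have "indep_var borel (X i) borel (\<lambda>\<omega>. Min ((\<lambda>i. X i \<omega>)`{k}))" by auto
  then have iv: "indep_var borel (X i) borel (X k)" by simp
  then have "distr M borel (X i) \<Otimes>\<^sub>M distr M borel (X k) = distr M (borel \<Otimes>\<^sub>M borel) (\<lambda>x. (X i x, X k x))"
    unfolding indep_var_distribution_eq by blast
  then have eq: "\<mu> \<Otimes>\<^sub>M \<mu> = distr M (borel \<Otimes>\<^sub>M borel) (\<lambda>x. (X i x, X k x))"
    using idd[OF ik(1)] idd[OF ik(2)] unfolding \<mu>_def by simp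
  define D where "D = {p \<in> space (borel \<Otimes>\<^sub>M borel :: (real \<times> real) measure). fst p = snd p}"
  have Dm: "D \<in> sets (borel \<Otimes>\<^sub>M borel)" unfolding D_def by measurable
  have "emeasure (\<mu> \<Otimes>\<^sub>M \<mu>) D = (\<integral>\<^sup>+a. emeasure \<mu> (Pair a -` D) \<partial>\<mu>)"
  proof (rule mu.emeasure_pair_measure_alt)
    have "sets (\<mu> \<Otimes>\<^sub>M \<mu>) = sets (borel \<Otimes>\<^sub>M borel)"
      by (rule sets_pair_measure_cong) simp_all
    then show "D \<in> sets (\<mu> \<Otimes>\<^sub>M \<mu>)" using Dm by simp
  qed
  also have "\<dots> = (\<integral>\<^sup>+a. emeasure \<mu> {a} \<partial>\<mu>)"
    by (intro nn_integral_cong) (auto simp: D_def space_pair_measure)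
  also have "\<dots> = 0" by (simp add: single)
  finally have "emeasure (distr M (borel \<Otimes>\<^sub>M borel) (\<lambda>x. (X i x, X k x))) D = 0" using eq by simp
  moreover have "(\<lambda>x. (X i x, X k x)) \<in> measurable M (borel \<Otimes>\<^sub>M borel)"
    using meas ik by measurable
  ultimately have "emeasure M ((\<lambda>x. (X i x, X k x)) -` D \<inter> space M) = 0"
    using Dm by (simp add: emeasure_distr)
  moreover have "(\<lambda>x. (X i x, X k x)) -` D \<inter> space M = {x\<in>space M. X i x = X k x}"
    by (auto simp: D_def space_pair_measure)
  ultimately show ?thesis by (simp add: measure_def)
qed


lemma record_prob:
  fixes M :: "'a measure" and X :: "nat \<Rightarrow> 'a \<Rightarrow> real"
  assumes P: "prob_space M"
    and meas: "\<And>t. t \<ge> 1 \<Longrightarrow> X t \<in> borel_measurable M"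
    and ind: "prob_space.indep_vars M (\<lambda>_. borel) X {1..}"
    and idd: "\<And>t. t \<ge> 1 \<Longrightarrow> distr M borel (X t) = distr M borel (X 1)"
    and cont: "continuous_on UNIV (cdf (distr M borel (X 1)))"
    and t: "t \<ge> 2"
  shows "measure M {x\<in>space M. Max ((\<lambda>s. X s x) ` {1..<t}) < X t x} = 1 / real t"
proof -
  interpret prob_space M by fact
  define J where "J = {1..t}"
  have J: "finite J" "J \<noteq> {}" "t \<in> J" using t by (auto simp: J_def)
  define \<mu> where "\<mu> = distr M borel (X 1)"
  have rd: "real_distribution \<mu>" unfolding \<mu>_def
    using meas[of 1] by (auto simp: real_distribution_def real_distribution_axioms_def intro!: prob_space_distr)
  interpret mu: real_distribution \<mu> by fact
  define PB where "PB = (\<Pi>\<^sub>M i\<in>J. (borel :: real measure))"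
  define Pm where "Pm = (\<Pi>\<^sub>M i\<in>J. \<mu>)"
  interpret Pm: prob_space Pm unfolding Pm_def by (intro prob_space_PiM) (simp add: mu.prob_space_axioms)
  have sPm: "sets Pm = sets PB" unfolding Pm_def PB_def by (intro sets_PiM_cong) auto
  have spPm: "space Pm = space PB" using sPm by (rule sets_eq_imp_space_eq)
  define Y where "Y x = (\<lambda>i\<in>J. X i x)" for x
  have Ym: "Y \<in> measurable M PB" unfolding Y_def PB_def
    by (intro measurable_restrict) (use meas in \<open>auto simp: J_def\<close>)
  define X' where "X' i = (if i \<in> J then X i else (\<lambda>_. 0::real))" for i
  have ind': "indep_vars (\<lambda>_. borel) X' J"
  proof -
    have "indep_vars (\<lambda>_. borel) X J" using ind by (rule indep_vars_subset) (auto simp: J_def)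
    then show ?thesis by (subst indep_vars_cong[of J J X' X]) (auto simp: X'_def)
  qed
  have rv': "random_variable borel (X' i)" for i using meas by (auto simp: X'_def J_def)
  have eqv: "indep_vars (\<lambda>_. borel) X' J \<longleftrightarrow> distr M (\<Pi>\<^sub>M i\<in>J. borel) (\<lambda>x. \<lambda>i\<in>J. X' i x) = (\<Pi>\<^sub>M i\<in>J. distr M borel (X' i))"
    by (rule indep_vars_iff_distr_eq_PiM) (use J rv' in auto)
  have "distr M PB (\<lambda>x. \<lambda>i\<in>J. X' i x) = (\<Pi>\<^sub>M i\<in>J. distr M borel (X' i))"
    unfolding PB_def by (rule eqv[THEN iffD1, OF ind'])
  also have "(\<lambda>x. \<lambda>i\<in>J. X' i x) = Y" by (auto simp: Y_def X'_def fun_eq_iff)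
  also have "(\<Pi>\<^sub>M i\<in>J. distr M borel (X' i)) = Pm"
  proof (unfold Pm_def, intro PiM_cong refl)
    fix i assume "i \<in> J"
    then show "distr M borel (X' i) = \<mu>" using idd[of i] by (simp add: X'_def \<mu>_def J_def)
  qed
  finally have distrY: "distr M PB Y = Pm" .
  define A where "A j = {y\<in>space PB. \<forall>i\<in>J. i \<noteq> j \<longrightarrow> y i < y j}" for j
  have Am: "A j \<in> sets PB" if "j \<in> J" for j
  proof -
    have "A j = space PB \<inter> (\<Inter>i\<in>J-{j}. {y\<in>space PB. y i < y j})" by (auto simp: A_def)
    also have "\<dots> \<in> sets PB" unfolding PB_def using J that by measurable
    finally show ?thesis .
  qed
  define B where "B j = {x\<in>space M. \<forall>i\<in>J. i \<noteq> j \<longrightarrow> X i x < X j x}" for j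
  have BA: "B j = Y -` A j \<inter> space M" if "j \<in> J" for j
    using Ym that by (auto simp: A_def B_def Y_def PB_def space_PiM)
  have Bm: "B j \<in> events" if "j \<in> J" for j using BA[OF that] Am[OF that] Ym by auto
  have PB: "prob (B j) = measure Pm (A j)" if "j \<in> J" for j
    using BA[OF that] Am[OF that] Ym distrY by (metis measure_distr)
  have sym: "measure Pm (A j) = measure Pm (A t)" if j: "j \<in> J" for j
  proof -
    define \<sigma> where "\<sigma> n = (if n = j then t else if n = t then j else n)" for n
    have inj: "inj_on \<sigma> J" by (auto simp: inj_on_def \<sigma>_def split: if_splits)
    have sfun: "\<sigma> \<in> J \<rightarrow> J" using j J by (auto simp: \<sigma>_def)
    define R where "R \<omega> = (\<lambda>n\<in>J. \<omega> (\<sigma> n))" for \<omega> :: "nat \<Rightarrow> real"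
    have dR: "distr Pm Pm R = Pm"
      unfolding Pm_def R_def using distr_PiM_reindex[OF _ inj sfun, of "\<lambda>_. \<mu>"] mu.prob_space_axioms by simp
    have Rm: "R \<in> measurable Pm Pm" unfolding R_def Pm_def
      using sfun by (intro measurable_restrict measurable_component_singleton) auto
    have "measure Pm (A t) = measure (distr Pm Pm R) (A t)" using dR by simp
    also have "\<dots> = measure Pm (R -` A t \<inter> space Pm)"
      using Rm Am[OF J(3)] sPm by (intro measure_distr) auto
    also have "R -` A t \<inter> space Pm = A j"
    proof (intro equalityI subsetI)
      fix \<omega> assume w: "\<omega> \<in> R -` A t \<inter> space Pm"
      then have w1: "\<And>i. i \<in> J \<Longrightarrow> i \<noteq> t \<Longrightarrow> \<omega> (\<sigma> i) < \<omega> (\<sigma> t)"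
        using sfun J(3) by (auto simp: A_def R_def Pi_iff)
      have "\<omega> i < \<omega> j" if "i \<in> J" "i \<noteq> j" for i
        using w1[of "\<sigma> i"] that j by (cases "i = t"; cases "j = t"; simp add: \<sigma>_def)
      then show "\<omega> \<in> A j" using w spPm by (auto simp: A_def)
    next
      fix \<omega> assume w: "\<omega> \<in> A j"
      have "R \<omega> \<in> space PB" unfolding PB_def R_def by (auto simp: space_PiM)
      moreover have "R \<omega> i < R \<omega> t" if "i \<in> J" "i \<noteq> t" for i
        using w that j J sfun unfolding R_def A_def by (auto simp: \<sigma>_def)
      ultimately show "\<omega> \<in> R -` A t \<inter> space Pm" using w spPm by (auto simp: A_def)
    qed
    finally show ?thesis by simp
  qed
  have disj: "disjoint_family_on B J"
    unfolding disjoint_family_on_def B_def by fastforce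
  define E where "E p = {x\<in>space M. X (fst p) x = X (snd p) x}" for p
  define Q where "Q = {p. fst p \<in> J \<and> snd p \<in> J \<and> fst p \<noteq> snd p}"
  have Qf: "finite Q" by (rule finite_subset[of _ "J \<times> J"]) (auto simp: Q_def J)
  have Em: "E p \<in> events" if "p \<in> Q" for p
    using that meas unfolding E_def Q_def J_def by auto
  have E0: "prob (E p) = 0" if "p \<in> Q" for p
    using that no_ties[OF P meas ind idd cont] unfolding E_def Q_def J_def by auto
  have cover: "space M \<subseteq> (\<Union>j\<in>J. B j) \<union> (\<Union>p\<in>Q. E p)"
  proof
    fix x assume x: "x \<in> space M"
    show "x \<in> (\<Union>j\<in>J. B j) \<union> (\<Union>p\<in>Q. E p)"
    proof (cases "x \<in> (\<Union>p\<in>Q. E p)")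
      case False
      have "Max ((\<lambda>i. X i x) ` J) \<in> (\<lambda>i. X i x) ` J"
        using J by (intro Max_in) auto
      then obtain j where j: "j \<in> J" "X j x = Max ((\<lambda>i. X i x) ` J)"
        by (metis (no_types, lifting) imageE)
      have "X i x < X j x" if "i \<in> J" "i \<noteq> j" for i
      proof -
        have "X i x \<le> X j x" using j that J by auto
        moreover have "X i x \<noteq> X j x" using False that j x by (auto simp: E_def Q_def) metis
        ultimately show ?thesis by simp
      qed
      then have "x \<in> B j" using x unfolding B_def by blast
      then show ?thesis using j(1) by blast
    qed simp
  qed
  have "prob (\<Union>p\<in>Q. E p) \<le> (\<Sum>p\<in>Q. prob (E p))"
    using Qf Em by (intro finite_measure_subadditive_finite) auto
  also have "\<dots> = 0" using E0 by simp
  finally have Tz: "prob (\<Union>p\<in>Q. E p) = 0" by (simp add: measure_nonneg antisym)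
  have UB: "prob (\<Union>j\<in>J. B j) = (\<Sum>j\<in>J. prob (B j))"
    using J Bm disj by (intro measure_finite_Union) (auto simp: emeasure_eq_measure)
  also have "\<dots> = (\<Sum>j\<in>J. prob (B t))" by (intro sum.cong refl) (metis PB sym J(3))
  also have "\<dots> = real t * prob (B t)" by (simp add: J_def)
  finally have UB': "prob (\<Union>j\<in>J. B j) = real t * prob (B t)" .
  have "1 = prob (space M)" by (simp add: prob_space)
  also have "\<dots> \<le> prob ((\<Union>j\<in>J. B j) \<union> (\<Union>p\<in>Q. E p))"
    using cover Bm Em J Qf by (intro finite_measure_mono) auto
  also have "\<dots> \<le> prob (\<Union>j\<in>J. B j) + prob (\<Union>p\<in>Q. E p)"
    using Bm Em J Qf by (intro measure_Un_le) auto
  finally have "1 \<le> real t * prob (B t)" using Tz UB' by simp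
  moreover have "prob (\<Union>j\<in>J. B j) \<le> 1" by (rule prob_le_1)
  ultimately have "real t * prob (B t) = 1" using UB' by simp
  moreover have "{x\<in>space M. Max ((\<lambda>s. X s x) ` {1..<t}) < X t x} = B t"
  proof -
    have "J - {t} = {1..<t}" by (auto simp: J_def)
    moreover have "{1..<t} \<noteq> {}" using t by auto
    ultimately show ?thesis unfolding B_def
      by (auto simp: Max_less_iff J_def)
  qed
  ultimately show ?thesis using t by (simp add: field_simps)
qed



lemma pw_mvt:
  fixes a :: real and t :: nat
  assumes a: "a > 0" and t: "t \<ge> 2"
  shows "real t powr (a-1) \<le> (2 powr \<bar>a-1\<bar> / a) * (real t powr a - real (t-1) powr a)"
    and "(real t powr a - real (t-1) powr a) / (a * 2 powr \<bar>a-1\<bar>) \<le> real t powr (a-1)"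
proof -
  define K where "K = (2::real) powr \<bar>a-1\<bar>"
  have K1: "K \<ge> 1" unfolding K_def by (rule ge_one_powr_ge_zero) auto
  have tm1: "real (t-1) = real t - 1" using t by simp
  have "\<exists>z. real t - 1 < z \<and> z < real t \<and> (real t powr a - (real t - 1) powr a = (real t - (real t - 1)) * (a * z powr (a - 1)))"
    by (rule MVT2) (use t in \<open>auto intro!: has_real_derivative_powr\<close>)
  then obtain z where z: "real t - 1 < z" "z < real t" and dz: "real t powr a - real (t-1) powr a = a * z powr (a-1)"
    using tm1 by auto
  have tpos: "real t > 0" using t by simp
  have zpos: "z > 0" using z t by simp
  define q where "q = (z / real t) powr (a-1)"
  have r1: "z / real t \<ge> 1/2" using z t by (simp add: field_simps)
  have r2: "z / real t \<le> 1" using z tpos by simp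
  have qb: "1/K \<le> q \<and> q \<le> K"
  proof (cases "a \<ge> 1")
    case True
    have "q \<le> 1" unfolding q_def using True r2 zpos by (intro powr_le1) auto
    moreover have "(1/2) powr (a-1) \<le> q" unfolding q_def using True r1 by (intro powr_mono2) auto
    moreover have "(1/2::real) powr (a-1) = 1/K" unfolding K_def using True
      by (simp add: powr_divide)
    ultimately show ?thesis using K1 by simp
  next
    case False
    have "1 \<le> q" unfolding q_def using False r2 zpos tpos
      using powr_mono2'[of "a-1" "z/real t" 1] by simp
    moreover have "q \<le> (1/2) powr (a-1)" unfolding q_def using False r1
      by (intro powr_mono2') auto
    moreover have "(1/2::real) powr (a-1) = K" unfolding K_def using False
      by (simp add: powr_divide powr_minus_divide[symmetric])
    ultimately show ?thesis using K1 by (smt (verit) divide_le_eq_1)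
  qed
  have zq: "z powr (a-1) = q * real t powr (a-1)"
    unfolding q_def using zpos tpos by (simp add: powr_divide)
  have qpos: "q > 0" unfolding q_def using zpos tpos by simp
  have tp: "real t powr (a-1) > 0" using tpos by simp
  show "real t powr (a-1) \<le> (2 powr \<bar>a-1\<bar> / a) * (real t powr a - real (t-1) powr a)"
  proof -
    have "real t powr (a-1) \<le> K * q * real t powr (a-1)"
      using qb qpos tp K1 by (simp add: field_simps)
    also have "\<dots> = (K / a) * (a * z powr (a-1))" using a zq by simp
    finally show ?thesis unfolding K_def dz by simp
  qed
  show "(real t powr a - real (t-1) powr a) / (a * 2 powr \<bar>a-1\<bar>) \<le> real t powr (a-1)"
  proof -
    have "(a * z powr (a-1)) / (a * K) = q * real t powr (a-1) / K" using a zq by simp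
    also have "\<dots> \<le> real t powr (a-1)" using qb qpos tp K1 by (simp add: field_simps)
    finally show ?thesis unfolding K_def dz by simp
  qed
qed

lemma pw_sum_upper:
  fixes a :: real
  assumes a: "a > 0"
  shows "T \<ge> 1 \<Longrightarrow> (\<Sum>t=1..T. real t powr (a-1)) \<le> 1 + (2 powr \<bar>a-1\<bar> / a) * (real T powr a - 1)"
proof (induction T rule: dec_induct)
  case base then show ?case by simp
next
  case (step T)
  have "(\<Sum>t=1..Suc T. real t powr (a-1)) = (\<Sum>t=1..T. real t powr (a-1)) + real (Suc T) powr (a-1)"
    by simp
  also have "\<dots> \<le> 1 + (2 powr \<bar>a-1\<bar> / a) * (real T powr a - 1) + (2 powr \<bar>a-1\<bar> / a) * (real (Suc T) powr a - real (Suc T - 1) powr a)"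
    using step.IH pw_mvt(1)[OF a, of "Suc T"] step.hyps by simp
  also have "\<dots> = 1 + (2 powr \<bar>a-1\<bar> / a) * (real (Suc T) powr a - 1)"
    using a by (simp add: field_simps)
  finally show ?case .
qed

lemma pw_sum_lower:
  fixes a :: real
  assumes a: "a > 0"
  shows "T \<ge> 1 \<Longrightarrow> (real T powr a - 1) / (a * 2 powr \<bar>a-1\<bar>) \<le> (\<Sum>t=1..T. real t powr (a-1))"
proof (induction T rule: dec_induct)
  case base then show ?case by simp
next
  case (step T)
  have "(real (Suc T) powr a - 1) / (a * 2 powr \<bar>a-1\<bar>) =
     (real T powr a - 1) / (a * 2 powr \<bar>a-1\<bar>) + (real (Suc T) powr a - real (Suc T - 1) powr a) / (a * 2 powr \<bar>a-1\<bar>)"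
    by (simp add: diff_divide_distrib add_divide_distrib[symmetric])
  also have "\<dots> \<le> (\<Sum>t=1..T. real t powr (a-1)) + real (Suc T) powr (a-1)"
    using step.IH pw_mvt(2)[OF a, of "Suc T"] step.hyps by simp
  also have "\<dots> = (\<Sum>t=1..Suc T. real t powr (a-1))" by simp
  finally show ?case .
qed


lemma sum_if_le:
  fixes f :: "nat \<Rightarrow> real"
  assumes "t1 \<le> T"
  shows "(\<Sum>t=1..T. if t \<le> t1 then f t else 0) = (\<Sum>t=1..t1. f t)"
proof -
  have "(\<Sum>t\<in>{1..T} \<inter> {t. t \<le> t1}. f t) = (\<Sum>t=1..T. if t \<in> {t. t \<le> t1} then f t else 0)"
    by (rule sum.inter_restrict) simp
  moreover have "{1..T} \<inter> {t. t \<le> t1} = {1..t1}" using assms by auto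
  ultimately show ?thesis by simp
qed

lemma analytic:
  fixes w :: "nat \<Rightarrow> real" and n :: real
  assumes lim: "(\<lambda>t. w t / real t powr n) \<longlonglongrightarrow> 1" and n: "n > 0"
  shows "\<exists>C. \<exists>T0. \<forall>T\<ge>T0. \<forall>i::nat\<Rightarrow>real. (\<forall>t. 0 \<le> i t \<and> i t \<le> 1) \<longrightarrow>
     -C \<le> (\<Sum>t=1..T. w t * (i t - 1/real t) / sqrt (\<Sum>k=1..T. (w k)\<^sup>2 * (1/real k * (1 - 1/real k))))"
proof -
  obtain t0 where t0: "\<And>t. t \<ge> t0 \<Longrightarrow> dist (w t / real t powr n) 1 < 1/2"
    using lim unfolding lim_sequentially by (metis half_gt_zero zero_less_one)
  define t1 where "t1 = max t0 2"
  have wb: "real t powr n / 2 \<le> w t \<and> w t \<le> 2 * real t powr n" if "t > t1" for t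
  proof -
    have tp: "real t powr n > 0" using that by (simp add: t1_def)
    have "\<bar>w t / real t powr n - 1\<bar> < 1/2" using t0[of t] that by (simp add: t1_def dist_real_def)
    then have "1/2 < w t / real t powr n" "w t / real t powr n < 3/2" by arith+
    then show ?thesis using tp by (simp add: field_simps)
  qed
  define K1 where "K1 = 2 powr \<bar>n-1\<bar> / n"
  define L2 where "L2 = 1 / (2*n * 2 powr \<bar>2*n-1\<bar>)"
  have K1: "K1 \<ge> 0" using n by (simp add: K1_def)
  have L2: "L2 > 0" using n by (simp add: L2_def)
  define E0 where "E0 = (\<Sum>t=1..t1. \<bar>w t\<bar>)"
  define C2 where "C2 = (\<Sum>t=1..t1. real t powr (2*n-1) / 8)"
  have E0: "E0 \<ge> 0" unfolding E0_def by (simp add: sum_nonneg)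
  have C2: "C2 \<ge> 0" unfolding C2_def by (simp add: sum_nonneg)
  define A where "A = E0 + 2 * (1 + K1)"
  define b where "b = sqrt (L2 / 16)"
  have b: "b > 0" using L2 by (simp add: b_def)
  have "filterlim (\<lambda>T::nat. real T powr (2*n)) at_top at_top" using n by real_asymp
  then have "eventually (\<lambda>T::nat. real T powr (2*n) \<ge> 2 + 16 * C2 / L2) at_top"
    by (simp add: filterlim_at_top)
  then obtain T1 where T1: "\<And>T. T \<ge> T1 \<Longrightarrow> real T powr (2*n) \<ge> 2 + 16 * C2 / L2"
    unfolding eventually_at_top_linorder by blast
  define T0 where "T0 = max T1 (t1 + 1)"
  show ?thesis
  proof (intro exI allI impI)
    fix T :: nat and i :: "nat \<Rightarrow> real" assume T: "T \<ge> T0" and i: "\<forall>t. 0 \<le> i t \<and> i t \<le> 1"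
    have T1': "T \<ge> 1" "T \<ge> t1" using T by (auto simp: T0_def)
    have Tn: "real T powr n \<ge> 1" using T1' by (intro ge_one_powr_ge_zero) (use n in auto)
    have cut: "{1..T} \<inter> {t. t \<le> t1} = {1..t1}" using T1' by auto
    have nterm: "w t * (i t - 1/real t) \<ge> - (if t \<le> t1 then \<bar>w t\<bar> else 0) - 2 * real t powr (n-1)"
      if t: "t \<in> {1..T}" for t
    proof (cases "t \<le> t1")
      case True
      have it: "0 \<le> i t" "i t \<le> 1" using i by auto
      have "0 < 1/real t" "1/real t \<le> 1" using t by auto
      then have "\<bar>i t - 1/real t\<bar> \<le> 1" unfolding abs_le_iff using it by linarith
      then have "\<bar>w t * (i t - 1/real t)\<bar> \<le> \<bar>w t\<bar>" by (simp add: abs_mult mult_left_le)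
      then have h: "- \<bar>w t\<bar> \<le> w t * (i t - 1/real t)" by linarith
      have p: "real t powr (n-1) \<ge> 0" by simp
      have "(if t \<le> t1 then \<bar>w t\<bar> else 0) = \<bar>w t\<bar>" using True by simp
      then show ?thesis using h p by linarith
    next
      case False
      then have wt: "real t powr n / 2 \<le> w t" "w t \<le> 2 * real t powr n" using wb by auto
      have tp: "real t > 0" using t by simp
      have "w t * (i t - 1/real t) \<ge> - (w t / real t)"
      proof -
        have "0 \<le> real t powr n / 2" by simp
        then have w0: "w t \<ge> 0" using wt(1) by linarith
        have "w t * i t \<ge> 0" using w0 i by simp
        moreover have "w t * (i t - 1/real t) = w t * i t - w t / real t" by (simp add: right_diff_distrib)
        ultimately show ?thesis by linarith
      qed
      moreover have "w t / real t \<le> 2 * real t powr n / real t" using wt tp by (simp add: divide_right_mono)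
      moreover have "real t powr n / real t = real t powr (n-1)" using tp by (simp add: powr_diff)
      ultimately show ?thesis using False by simp
    qed
    have "(\<Sum>t=1..T. w t * (i t - 1/real t)) \<ge> (\<Sum>t=1..T. - (if t \<le> t1 then \<bar>w t\<bar> else 0) - 2 * real t powr (n-1))"
      by (rule sum_mono) (use nterm in auto)
    also have "(\<Sum>t=1..T. - (if t \<le> t1 then \<bar>w t\<bar> else 0) - 2 * real t powr (n-1))
        = - (\<Sum>t=1..T. (if t \<le> t1 then \<bar>w t\<bar> else 0)) - 2 * (\<Sum>t=1..T. real t powr (n-1))"
      by (simp add: sum_subtractf sum_negf sum_distrib_left)
    also have "(\<Sum>t=1..T. (if t \<le> t1 then \<bar>w t\<bar> else 0)) = E0"
      unfolding E0_def using T1'(2) by (rule sum_if_le)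
    finally have num1: "(\<Sum>t=1..T. w t * (i t - 1/real t)) \<ge> - E0 - 2 * (\<Sum>t=1..T. real t powr (n-1))" .
    have "(\<Sum>t=1..T. real t powr (n-1)) \<le> 1 + K1 * (real T powr n - 1)"
      unfolding K1_def using pw_sum_upper[OF n T1'(1)] .
    also have "\<dots> \<le> (1 + K1) * real T powr n" using K1 Tn by (simp add: algebra_simps)
    finally have S: "(\<Sum>t=1..T. real t powr (n-1)) \<le> (1 + K1) * real T powr n" .
    have "E0 * 1 \<le> E0 * real T powr n" using E0 Tn by (intro mult_left_mono) auto
    then have "- A * real T powr n \<le> - E0 - 2 * ((1 + K1) * real T powr n)"
      unfolding A_def by (simp add: algebra_simps)
    then have num2: "(\<Sum>t=1..T. w t * (i t - 1/real t)) \<ge> - A * real T powr n"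
      using num1 S by linarith
    have dterm: "(w k)\<^sup>2 * (1/real k * (1 - 1/real k)) \<ge> real k powr (2*n-1) / 8 - (if k \<le> t1 then real k powr (2*n-1) / 8 else 0)"
      if k: "k \<in> {1..T}" for k
    proof (cases "k \<le> t1")
      case True
      have "1/real k * (1 - 1/real k) \<ge> 0" using k by (auto simp: field_simps)
      then have "(w k)\<^sup>2 * (1/real k * (1 - 1/real k)) \<ge> 0" by (metis mult_nonneg_nonneg zero_le_power2)
      then show ?thesis using True by simp
    next
      case False
      then have wt: "real k powr n / 2 \<le> w k" using wb by auto
      have kp: "real k \<ge> 2" using False by (simp add: t1_def)
      have kn: "real k powr n > 0" using kp by simp
      have "(w k)\<^sup>2 \<ge> (real k powr n / 2)\<^sup>2" using wt kn by (intro power_mono) auto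
      moreover have "(real k powr n / 2)\<^sup>2 = real k powr (2*n) / 4"
        by (simp add: power2_eq_square powr_add[symmetric])
      moreover have "1/real k * (1 - 1/real k) \<ge> 1 / (2 * real k)" using kp by (simp add: field_simps)
      ultimately have "(w k)\<^sup>2 * (1/real k * (1 - 1/real k)) \<ge> real k powr (2*n) / 4 * (1 / (2 * real k))"
        using kp by (intro mult_mono) auto
      moreover have "real k powr (2*n) / 4 * (1 / (2 * real k)) = real k powr (2*n-1) / 8"
        using kp by (simp add: powr_diff)
      ultimately have "(w k)\<^sup>2 * (1/real k * (1 - 1/real k)) \<ge> real k powr (2*n-1) / 8" by linarith
      moreover have "(if k \<le> t1 then real k powr (2*n-1) / 8 else 0) = 0" using False by simp
      ultimately show ?thesis by linarith
    qed
    have "(\<Sum>k=1..T. (w k)\<^sup>2 * (1/real k * (1 - 1/real k))) \<ge> (\<Sum>k=1..T. real k powr (2*n-1) / 8 - (if k \<le> t1 then real k powr (2*n-1) / 8 else 0))"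
      by (rule sum_mono) (use dterm in auto)
    also have "(\<Sum>k=1..T. real k powr (2*n-1) / 8 - (if k \<le> t1 then real k powr (2*n-1) / 8 else 0))
       = (\<Sum>k=1..T. real k powr (2*n-1)) / 8 - C2"
      unfolding C2_def sum_subtractf sum_if_le[OF T1'(2)] by (simp add: sum_divide_distrib)
    finally have d1: "(\<Sum>k=1..T. (w k)\<^sup>2 * (1/real k * (1 - 1/real k))) \<ge> (\<Sum>k=1..T. real k powr (2*n-1)) / 8 - C2" .
    have "L2 * (real T powr (2*n) - 1) \<le> (\<Sum>k=1..T. real k powr (2*n-1))"
      using pw_sum_lower[of "2*n" T] n T1'(1) unfolding L2_def by simp
    moreover have "real T powr (2*n) \<ge> 2 + 16 * C2 / L2" using T1 T by (simp add: T0_def)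
    ultimately have "(\<Sum>k=1..T. real k powr (2*n-1)) / 8 - C2 \<ge> L2 / 16 * real T powr (2*n)"
      using L2 C2 by (simp add: field_simps)
    moreover have "real T powr (2*n) = (real T powr n)\<^sup>2"
      by (simp add: power2_eq_square powr_add[symmetric])
    ultimately have d2: "(\<Sum>k=1..T. (w k)\<^sup>2 * (1/real k * (1 - 1/real k))) \<ge> (b * real T powr n)\<^sup>2"
      using d1 L2 unfolding b_def by (simp add: power_mult_distrib)
    have den: "sqrt (\<Sum>k=1..T. (w k)\<^sup>2 * (1/real k * (1 - 1/real k))) \<ge> b * real T powr n"
      using real_sqrt_le_mono[OF d2] b by simp
    have bT: "b * real T powr n > 0" using b Tn T1'(1) by (intro mult_pos_pos) auto
    define N where "N = (\<Sum>t=1..T. w t * (i t - 1/real t))"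
    define D where "D = sqrt (\<Sum>k=1..T. (w k)\<^sup>2 * (1/real k * (1 - 1/real k)))"
    have "(\<Sum>t=1..T. w t * (i t - 1/real t) / D) = N / D" unfolding N_def by (simp add: sum_divide_distrib)
    moreover have "N / D \<ge> - (A / b)"
    proof -
      have Dp: "D \<ge> b * real T powr n" "D > 0" using den bT unfolding D_def by linarith+
      have N: "N \<ge> - A * real T powr n" using num2 unfolding N_def .
      have A0: "A \<ge> 0" using E0 K1 by (simp add: A_def)
      have "- (A / b) = (- A * real T powr n) / (b * real T powr n)" using bT T1'(1) by simp
      also have "\<dots> \<le> (- A * real T powr n) / D"
        using Dp bT A0 Tn by (intro divide_left_mono_neg) (auto simp: mult_nonneg_nonneg)
      also have "\<dots> \<le> N / D" using N Dp(2) by (intro divide_right_mono) auto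
      finally show ?thesis .
    qed
    ultimately show "- (A / b) \<le> (\<Sum>t=1..T. w t * (i t - 1/real t) / sqrt (\<Sum>k=1..T. (w k)\<^sup>2 * (1/real k * (1 - 1/real k))))"
      unfolding D_def by simp
  qed
qed



lemma normal_facts:
  fixes c :: real
  shows "cdf std_normal_distribution c > 0" "isCont (cdf std_normal_distribution) c"
proof -
  interpret N: real_distribution std_normal_distribution by (rule real_dist_normal_dist)
  have dm: "(\<lambda>x. ennreal (std_normal_density x)) \<in> borel_measurable lborel" by measurable
  have "emeasure std_normal_distribution {..c} \<noteq> 0"
  proof
    assume "emeasure std_normal_distribution {..c} = 0"
    then have "{..c} \<in> null_sets std_normal_distribution" by (simp add: null_sets_def)
    then have "AE x in lborel. x \<in> {..c} \<longrightarrow> ennreal (std_normal_density x) = 0"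
      using null_sets_density_iff[OF dm] by blast
    then have "AE x in lborel. x \<notin> {c-1..c}"
      using normal_density_pos[of 1 0] by (rule_tac AE_mp) (auto intro!: AE_I2, metis less_irrefl)
    then have "{c-1..c} \<in> null_sets lborel" by (subst AE_iff_null_sets) auto
    then have "emeasure lborel {c-1..c} = 0" by (simp add: null_sets_def)
    then show False by simp
  qed
  then have "measure std_normal_distribution {..c} \<noteq> 0" by (simp add: N.emeasure_eq_measure)
  then show "cdf std_normal_distribution c > 0"
    unfolding cdf_def2 using measure_nonneg[of std_normal_distribution "{..c}"] by linarith
  have "emeasure lborel {c..c} = 0" by (simp del: atLeastAtMost_singleton)
  then have "{c} \<in> null_sets lborel" by (simp add: null_sets_def)
  then have "AE x in lborel. x \<notin> {c}" by (subst AE_iff_null_sets[symmetric]) auto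
  then have "AE x in lborel. x \<in> {c} \<longrightarrow> ennreal (std_normal_density x) = 0" by (rule AE_mp) auto
  then have "{c} \<in> null_sets std_normal_distribution"
    using null_sets_density_iff[OF dm] by simp
  then have "measure std_normal_distribution {c} = 0" by (simp add: measure_def null_sets_def)
  then show "isCont (cdf std_normal_distribution) c" using N.isCont_cdf by simp
qed


lemma record_facts:
  fixes M :: "'a measure" and X :: "nat \<Rightarrow> 'a \<Rightarrow> real"
  assumes P: "prob_space M"
    and meas: "\<And>t. t \<ge> 1 \<Longrightarrow> X t \<in> borel_measurable M"
    and ind: "prob_space.indep_vars M (\<lambda>_. borel) X {1..}"
    and idd: "\<And>t. t \<ge> 1 \<Longrightarrow> distr M borel (X t) = distr M borel (X 1)"
    and cont: "continuous_on UNIV (cdf (distr M borel (X 1)))"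
    and t: "t \<ge> 1"
  shows "record_ind X t \<in> borel_measurable M"
    "prob_space.expectation M (record_ind X t) = 1 / real t"
    "prob_space.variance M (record_ind X t) = 1 / real t * (1 - 1 / real t)"
proof -
  interpret prob_space M by fact
  have "(record_ind X t \<in> borel_measurable M) \<and> expectation (record_ind X t) = 1 / real t \<and>
    variance (record_ind X t) = 1 / real t * (1 - 1 / real t)"
  proof (cases "t = 1")
    case True
    then have r: "record_ind X t = (\<lambda>_. 1)" by (simp add: record_ind_def fun_eq_iff)
    show ?thesis unfolding r using True by (simp add: prob_space)
  next
    case False
    define B where "B = {x\<in>space M. Max ((\<lambda>s. X s x) ` {1..<t}) < X t x}"
    have Mx[measurable]: "(\<lambda>x. Max ((\<lambda>s. X s x) ` {1..<t})) \<in> borel_measurable M"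
      by (rule borel_measurable_Max) (auto intro: meas)
    have Xt[measurable]: "X t \<in> borel_measurable M" using meas t by simp
    have Bm: "B \<in> sets M" unfolding B_def by measurable
    have eq: "record_ind X t x = indicator B x" if "x \<in> space M" for x
      using False that by (simp add: record_ind_def B_def indicator_def)
    have eq2: "(record_ind X t x)\<^sup>2 = indicator B x" if "x \<in> space M" for x
      using eq[OF that] by (simp add: indicator_def)
    have pB: "measure M B = 1 / real t"
      unfolding B_def using record_prob[OF P meas ind idd cont] False t by simp
    have m: "record_ind X t \<in> borel_measurable M"
      using borel_measurable_indicator[OF Bm] by (rule measurable_cong[THEN iffD2, rotated]) (simp add: eq)
    have fin: "emeasure M B < \<infinity>" by (simp add: emeasure_eq_measure)
    have i1: "integrable M (record_ind X t)"
      using integrable_real_indicator[OF Bm fin] by (subst Bochner_Integration.integrable_cong[OF refl eq]) auto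
    have i2: "integrable M (\<lambda>x. (record_ind X t x)\<^sup>2)"
      using integrable_real_indicator[OF Bm fin] by (subst Bochner_Integration.integrable_cong[OF refl eq2]) auto
    have e1: "expectation (record_ind X t) = 1 / real t"
    proof -
      have "expectation (record_ind X t) = expectation (indicator B)"
        by (rule Bochner_Integration.integral_cong[OF refl]) (rule eq)
      then show ?thesis using Bm pB by simp
    qed
    have e2: "expectation (\<lambda>x. (record_ind X t x)\<^sup>2) = 1 / real t"
    proof -
      have "expectation (\<lambda>x. (record_ind X t x)\<^sup>2) = expectation (indicator B)"
        by (rule Bochner_Integration.integral_cong[OF refl]) (rule eq2)
      then show ?thesis using Bm pB by simp
    qed
    have "variance (record_ind X t) = 1 / real t - (1 / real t)\<^sup>2"
      using variance_eq[OF i1 i2] e1 e2 by simp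
    also have "\<dots> = 1 / real t * (1 - 1 / real t)" by (simp add: power2_eq_square algebra_simps)
    finally show ?thesis using m e1 by simp
  qed
  then show "record_ind X t \<in> borel_measurable M"
    "expectation (record_ind X t) = 1 / real t"
    "variance (record_ind X t) = 1 / real t * (1 - 1 / real t)" by auto
qed

theorem proposition2p1:
  fixes M :: "'a measure" and X :: "nat \<Rightarrow> 'a \<Rightarrow> real"
    and w :: "nat \<Rightarrow> real" and n :: real
  assumes "prob_space M"
    and "\<And>t. t \<ge> 1 \<Longrightarrow> X t \<in> borel_measurable M"
    and "prob_space.indep_vars M (\<lambda>_. borel) X {1..}"
    and "\<And>t. t \<ge> 1 \<Longrightarrow> distr M borel (X t) = distr M borel (X 1)"
    and "continuous_on UNIV (cdf (distr M borel (X 1)))"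
    and "(\<lambda>t. w t / real t powr n) \<longlonglongrightarrow> 1"
    and "n > 0"
  shows "\<not> weak_conv_m
           (\<lambda>T. distr M borel (\<lambda>x. \<Sum>t=1..T.
               w t * (record_ind X t x - prob_space.expectation M (record_ind X t))
               / sqrt (\<Sum>k=1..T. (w k)\<^sup>2 * prob_space.variance M (record_ind X k))))
           std_normal_distribution"
proof
  note A = assms(1-5)
  interpret prob_space M by fact
  define f where "f T x = (\<Sum>t=1..T.
               w t * (record_ind X t x - expectation (record_ind X t))
               / sqrt (\<Sum>k=1..T. (w k)\<^sup>2 * variance (record_ind X k)))" for T x
  assume wc: "weak_conv_m (\<lambda>T. distr M borel (\<lambda>x. \<Sum>t=1..T.
               w t * (record_ind X t x - expectation (record_ind X t))
               / sqrt (\<Sum>k=1..T. (w k)\<^sup>2 * variance (record_ind X k)))) std_normal_distribution"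
  then have wc': "weak_conv_m (\<lambda>T. distr M borel (f T)) std_normal_distribution"
    unfolding f_def .
  have fT: "f T x = (\<Sum>t=1..T. w t * (record_ind X t x - 1/real t) / sqrt (\<Sum>k=1..T. (w k)\<^sup>2 * (1/real k * (1 - 1/real k))))"
    for T x
  proof -
    have "(\<Sum>k=1..T. (w k)\<^sup>2 * variance (record_ind X k)) = (\<Sum>k=1..T. (w k)\<^sup>2 * (1/real k * (1 - 1/real k)))"
      by (intro sum.cong refl) (simp add: record_facts(3)[OF A])
    then show ?thesis unfolding f_def
      by (intro sum.cong refl) (simp add: record_facts(2)[OF A])
  qed
  obtain C T0 where CT: "\<And>T i. T \<ge> T0 \<Longrightarrow> (\<forall>t. 0 \<le> i t \<and> i t \<le> 1) \<Longrightarrow>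
     -C \<le> (\<Sum>t=1..T. w t * (i t - 1/real t) / sqrt (\<Sum>k=1..T. (w k)\<^sup>2 * (1/real k * (1 - 1/real k))))"
    using analytic[OF assms(6,7)] by blast
  have lb: "f T x \<ge> -C" if "T \<ge> T0" for T x
  proof -
    have "\<forall>t. 0 \<le> record_ind X t x \<and> record_ind X t x \<le> 1" by (simp add: record_ind_def)
    from CT[OF that this] show ?thesis unfolding fT .
  qed
  have fm: "f T \<in> borel_measurable M" for T
  proof -
    have [measurable]: "record_ind X t \<in> borel_measurable M" if "t \<in> {1..T}" for t
      using record_facts(1)[OF A] that by simp
    show ?thesis unfolding f_def by (intro borel_measurable_sum) (auto intro!: borel_measurable_divide borel_measurable_times borel_measurable_diff record_facts(1)[OF A])
  qed
  define c where "c = - C - 1"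
  have z: "cdf (distr M borel (f T)) c = 0" if "T \<ge> T0" for T
  proof -
    have "cdf (distr M borel (f T)) c = measure M (f T -` {..c} \<inter> space M)"
      unfolding cdf_def2 using fm by (intro measure_distr) auto
    also have "f T -` {..c} \<inter> space M = {}"
    proof -
      have "\<not> f T x \<le> c" for x using lb[OF that, of x] unfolding c_def by linarith
      then show ?thesis by auto
    qed
    finally show ?thesis by simp
  qed
  have "(\<lambda>T. cdf (distr M borel (f T)) c) \<longlonglongrightarrow> cdf std_normal_distribution c"
    using wc' normal_facts(2)[of c] unfolding weak_conv_m_def weak_conv_def by blast
  moreover have "(\<lambda>T. cdf (distr M borel (f T)) c) \<longlonglongrightarrow> 0"
    by (rule tendsto_eventually) (use z in \<open>auto simp: eventually_at_top_linorder\<close>)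
  ultimately have "cdf std_normal_distribution c = 0" by (rule LIMSEQ_unique)
  then show False using normal_facts(1)[of c] by simp
qed

end
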